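(* Let $f(1),f(2),\dots$ be a non-negative, non-decreasing sequence of real numbers with $f(1)=0$. Define $$a(n):=n\sum_{i=1}^{n}\frac{f(i)}{i^2}\qquad(n\ge 1).$$ Then $a(n+m)\le a(n)+a(m)+f(n+m)$ for all integers $n,m\ge 1$. *)

theory Defs
  imports Complex_Main
begin

text \<open>a(n) = n * sum_{i=1}^n f(i)/i^2; f is indexed by positive naturals (value at 0 unused).\<close>
definition a_seq :: "(nat \<Rightarrow> real) \<Rightarrow> nat \<Rightarrow> real" where
  "a_seq f n = real n * (\<Sum>i=1..n. f i / (real i)^2)"

end

theory Submission
  imports Defs
begin

lemma tail_bound:
  fixes f :: "nat \<Rightarrow> real"
  assumes nonneg: "\<And>i. i \<ge> 1 \<Longrightarrow> f i \<ge> 0"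
    and mono: "\<And>i j. 1 \<le> i \<Longrightarrow> i \<le> j \<Longrightarrow> f i \<le> f j"
    and k: "k \<ge> 1"
  shows "k + d \<le> N \<Longrightarrow> (\<Sum>i=k+1..k+d. f i / (real i)^2) \<le> f N * (1 / k - 1 / (k + d))"
proof (induction d)
  case 0
  then show ?case by simp
next
  case (Suc d)
  define x where "x = real (k + d)"
  have x1: "x \<ge> 1" using k by (simp add: x_def)
  have fN: "f N \<ge> 0" using nonneg[of N] Suc.prems k by simp
  have fle: "f (k + Suc d) \<le> f N" using mono[of "k + Suc d" N] Suc.prems by simp
  have ineq: "1 / (x+1)^2 \<le> 1/x - 1/(x+1)"
  proof -
    have "1/x - 1/(x+1) = 1/(x*(x+1))" using x1 by (simp add: field_simps)
    moreover have "1 / (x+1)^2 \<le> 1/(x*(x+1))"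
      using x1 by (intro divide_left_mono) (auto simp: power2_eq_square intro: mult_right_mono)
    ultimately show ?thesis by simp
  qed
  have "f (k + Suc d) / (real (k + Suc d))^2 \<le> f N / (x+1)^2"
  proof -
    have "real (k + Suc d) = x + 1" by (simp add: x_def)
    moreover have "f (k + Suc d) / (x+1)^2 \<le> f N / (x+1)^2"
      by (rule divide_right_mono[OF fle]) simp
    ultimately show ?thesis by (simp add: add.commute)
  qed
  also have "\<dots> = f N * (1 / (x+1)^2)" by simp
  also have "\<dots> \<le> f N * (1/x - 1/(x+1))" using ineq fN by (rule mult_left_mono)
  finally have st: "f (k + Suc d) / (real (k + Suc d))^2 \<le> f N * (1/x - 1/(x+1))" .
  have IH: "(\<Sum>i=k+1..k+d. f i / (real i)^2) \<le> f N * (1 / k - 1 / x)"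
    using Suc by (simp add: x_def)
  have "(\<Sum>i=k+1..k+Suc d. f i / (real i)^2) = (\<Sum>i=k+1..k+d. f i / (real i)^2) + f (k + Suc d) / (real (k + Suc d))^2"
    by simp
  also have "\<dots> \<le> f N * (1 / k - 1 / x) + f N * (1/x - 1/(x+1))" using IH st by linarith
  also have "\<dots> = f N * (1 / real k - 1 / (x + 1))" by (simp add: right_diff_distrib)
  also have "x + 1 = real k + real (Suc d)" by (simp add: x_def)
  finally show ?case .
qed

lemma split_sum:
  fixes g :: "nat \<Rightarrow> real"
  shows "(\<Sum>i=1..k+d. g i) = (\<Sum>i=1..k. g i) + (\<Sum>i=k+1..k+d. g i)"
  by (induction d) auto

theorem claim6p1:
  fixes f :: "nat \<Rightarrow> real" and n m :: nat
  assumes nonneg: "\<And>i. i \<ge> 1 \<Longrightarrow> f i \<ge> 0"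
    and mono: "\<And>i j. 1 \<le> i \<Longrightarrow> i \<le> j \<Longrightarrow> f i \<le> f j"
    and f1: "f 1 = 0"
    and n: "n \<ge> 1" and m: "m \<ge> 1"
  shows "a_seq f (n + m) \<le> a_seq f n + a_seq f m + f (n + m)"
proof -
  define g where "g i = f i / (real i)^2" for i
  define S where "S k = (\<Sum>i=1..k. g i)" for k
  define T1 where "T1 = (\<Sum>i=n+1..n+m. g i)"
  define T2 where "T2 = (\<Sum>i=m+1..m+n. g i)"
  have s1: "S (n+m) = S n + T1" unfolding S_def T1_def by (rule split_sum)
  have s2: "S (n+m) = S m + T2" unfolding S_def T2_def by (metis split_sum add.commute)
  have b1: "T1 \<le> f (n+m) * (1/n - 1/(n+m))" unfolding T1_def g_def
    using tail_bound[OF nonneg mono n, where d=m and N="n+m"] by simp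
  have b2: "T2 \<le> f (n+m) * (1/m - 1/(n+m))" unfolding T2_def g_def
    using tail_bound[OF nonneg mono m, where d=n and N="n+m"] by (simp add: add.commute)
  have "a_seq f (n+m) = real n * S (n+m) + real m * S (n+m)"
    by (simp add: a_seq_def S_def g_def algebra_simps)
  also have "\<dots> = real n * S n + real m * S m + (real n * T1 + real m * T2)"
  proof -
    have "real n * S (n+m) = real n * S n + real n * T1" using s1 by (simp add: algebra_simps)
    moreover have "real m * S (n+m) = real m * S m + real m * T2" using s2 by (simp add: algebra_simps)
    ultimately show ?thesis by simp
  qed
  also have "real n * T1 + real m * T2 \<le> real n * (f (n+m) * (1/n - 1/(n+m))) + real m * (f (n+m) * (1/m - 1/(n+m)))"
    using b1 b2 by (intro add_mono mult_left_mono) auto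
  also have "\<dots> = f (n+m)"
  proof -
    have pn: "real n > 0" "real m > 0" using n m by auto
    have one: "real n * (1/n - 1/(n+m)) + real m * (1/m - 1/(n+m)) = 1"
    proof -
      have e1: "real n * (1/n - 1/(n+m)) = 1 - real n/(n+m)"
        using pn by (simp add: right_diff_distrib)
      have e2: "real m * (1/m - 1/(n+m)) = 1 - real m/(n+m)"
        using pn by (simp add: right_diff_distrib)
      have e3: "real n/(n+m) + real m/(n+m) = (real n + real m)/(n+m)"
        by (rule add_divide_distrib[symmetric])
      have e: "real n * (1/n - 1/(n+m)) + real m * (1/m - 1/(n+m)) = 2 - (real n + real m)/(n+m)"
        using e1 e2 e3 by linarith
      have "(real n + real m)/(n+m) = 1" using pn by simp
      thus ?thesis using e by simp
    qed
    have gen: "\<And>F A B::real. real n * (F * A) + real m * (F * B) = F * (real n * A + real m * B)"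
      by (simp add: algebra_simps)
    show ?thesis unfolding gen one by simp
  qed
  finally show ?thesis by (simp add: a_seq_def S_def g_def)
qed

end
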